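(* Let $H$ be a complex Hilbert space and let $U_0(H)$ be the set of unitary operators on $H$ which fix each element of the orthogonal complement of some finite-dimensional subspace of $H$. Then $d(u,v) := \mathrm{rank}(u - v)$ defines a distance on $U_0(H)$ with values in the nonnegative integers. Moreover, if $F \subset E$ are finite-dimensional subspaces of $H$ and $u$ is a unitary operator fixing each element of $E^{\perp}$, then $\pi_{E,F}(u)$ is the unique unitary operator fixing each element of $F^{\perp}$ for which $d(u, \pi_{E,F}(u))$ is minimal (among unitary operators fixing each element of $F^\perp$); the image of $H$ by $u - \pi_{E,F}(u)$ equals the image of $F^{\perp}$ by $u - \mathrm{Id}$; and $$d(u, \pi_{E,F}(u)) = \dim(E) - \dim(F) - \dim(\{x \in E \cap F^{\perp} : u(x) = x\}).$$ In particular, if no nonzero $x \in E\cap F^\perp$ satisfies $u(x)=x$, then $d(u,\pi_{E,F}(u)) = \dim(E) - \dim(F)$.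
   Context: For a complex Hilbert space $H$, a finite-dimensional subspace $E$, a subspace $F\subset E$ and a unitary $u$ on $H$ fixing each element of $E^\perp$, $\pi_{E,F}(u)$ denotes the unique unitary operator on $H$ which fixes each element of $F^\perp$ and such that the image of $H$ by $u-\pi_{E,F}(u)$ is included in the image of $F^\perp$ by $u-\mathrm{Id}$ (existence and uniqueness are known). *)

theory Defs
  imports "HOL-Analysis.Analysis"
begin

text \<open>A complex Hilbert space is modelled as a type 'a (an additive abelian group)
together with a complex scalar multiplication sc and an inner product ip,
conjugate-linear in the first argument, linear in the second.\<close>

definition cnorm :: "('a \<Rightarrow> 'a \<Rightarrow> complex) \<Rightarrow> 'a \<Rightarrow> real" where
  "cnorm ip x = sqrt (Re (ip x x))"

definition complex_hilbert_space ::
  "(complex \<Rightarrow> 'a::ab_group_add \<Rightarrow> 'a) \<Rightarrow> ('a \<Rightarrow> 'a \<Rightarrow> complex) \<Rightarrow> bool" where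
  "complex_hilbert_space sc ip \<longleftrightarrow>
     vector_space sc \<and>
     (\<forall>x y z. ip x (y + z) = ip x y + ip x z) \<and>
     (\<forall>c x y. ip x (sc c y) = c * ip x y) \<and>
     (\<forall>x y. ip y x = cnj (ip x y)) \<and>
     (\<forall>x. Im (ip x x) = 0 \<and> Re (ip x x) \<ge> 0) \<and>
     (\<forall>x. ip x x = 0 \<longrightarrow> x = 0) \<and>
     (\<forall>X :: nat \<Rightarrow> 'a.
        (\<forall>e>0. \<exists>N. \<forall>m\<ge>N. \<forall>n\<ge>N. cnorm ip (X m - X n) < e) \<longrightarrow>
        (\<exists>l. \<forall>e>0. \<exists>N. \<forall>n\<ge>N. cnorm ip (X n - l) < e))"

definition fin_dim_subspace :: "(complex \<Rightarrow> 'a::ab_group_add \<Rightarrow> 'a) \<Rightarrow> 'a set \<Rightarrow> bool" where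
  "fin_dim_subspace sc E \<longleftrightarrow> module.subspace sc E \<and> (\<exists>B. finite B \<and> module.span sc B = E)"

definition orth :: "('a \<Rightarrow> 'a \<Rightarrow> complex) \<Rightarrow> 'a set \<Rightarrow> 'a set" where
  "orth ip S = {x. \<forall>y\<in>S. ip y x = 0}"

definition unitary_op ::
  "(complex \<Rightarrow> 'a::ab_group_add \<Rightarrow> 'a) \<Rightarrow> ('a \<Rightarrow> 'a \<Rightarrow> complex) \<Rightarrow> ('a \<Rightarrow> 'a) \<Rightarrow> bool" where
  "unitary_op sc ip u \<longleftrightarrow> Vector_Spaces.linear sc sc u \<and> bij u \<and> (\<forall>x y. ip (u x) (u y) = ip x y)"

definition fixes_perp :: "('a \<Rightarrow> 'a \<Rightarrow> complex) \<Rightarrow> ('a \<Rightarrow> 'a) \<Rightarrow> 'a set \<Rightarrow> bool" where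
  "fixes_perp ip u E \<longleftrightarrow> (\<forall>x\<in>orth ip E. u x = x)"

definition U0 :: "(complex \<Rightarrow> 'a::ab_group_add \<Rightarrow> 'a) \<Rightarrow> ('a \<Rightarrow> 'a \<Rightarrow> complex) \<Rightarrow> ('a \<Rightarrow> 'a) set" where
  "U0 sc ip = {u. unitary_op sc ip u \<and> (\<exists>E. fin_dim_subspace sc E \<and> fixes_perp ip u E)}"

definition dist_rank :: "(complex \<Rightarrow> 'a::ab_group_add \<Rightarrow> 'a) \<Rightarrow> ('a \<Rightarrow> 'a) \<Rightarrow> ('a \<Rightarrow> 'a) \<Rightarrow> nat" where
  "dist_rank sc u v = vector_space.dim sc (range (\<lambda>x. u x - v x))"

definition pi_EF ::
  "(complex \<Rightarrow> 'a::ab_group_add \<Rightarrow> 'a) \<Rightarrow> ('a \<Rightarrow> 'a \<Rightarrow> complex) \<Rightarrow> 'a set \<Rightarrow> 'a set \<Rightarrow> ('a \<Rightarrow> 'a) \<Rightarrow> ('a \<Rightarrow> 'a)" where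
  "pi_EF sc ip E F u = (THE w. unitary_op sc ip w \<and> fixes_perp ip w F \<and>
      range (\<lambda>x. u x - w x) \<subseteq> (\<lambda>x. u x - x) ` orth ip F)"

end

theory Submission
  imports Defs
begin


locale hsp = vector_space sc for sc :: "complex \<Rightarrow> 'a::ab_group_add \<Rightarrow> 'a" +
  fixes ip :: "'a \<Rightarrow> 'a \<Rightarrow> complex"
  assumes ip_add2: "ip x (y + z) = ip x y + ip x z"
    and ip_scale2: "ip x (sc c y) = c * ip x y"
    and ip_cnj: "ip y x = cnj (ip x y)"
    and ip_def0: "ip x x = 0 \<Longrightarrow> x = 0"
begin

lemma ip_add1: "ip (x + y) z = ip x z + ip y z"
  by (metis ip_add2 ip_cnj complex_cnj_add)

lemma ip_scale1: "ip (sc c x) y = cnj c * ip x y"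
  by (metis ip_scale2 ip_cnj complex_cnj_mult)

lemma ip_zero2[simp]: "ip x 0 = 0"
  using ip_add2[of x 0 0] by simp

lemma ip_zero1[simp]: "ip 0 x = 0"
  using ip_add1[of 0 0 x] by simp

lemma ip_neg2: "ip x (- y) = - ip x y"
  using ip_add2[of x y "-y"] by (simp add: eq_neg_iff_add_eq_0 add.commute)

lemma ip_neg1: "ip (- x) y = - ip x y"
  using ip_add1[of x "-x" y] by (simp add: eq_neg_iff_add_eq_0 add.commute)

lemma ip_diff2: "ip x (y - z) = ip x y - ip x z"
  using ip_add2[of x y "-z"] ip_neg2 by simp

lemma ip_diff1: "ip (x - y) z = ip x z - ip y z"
  using ip_add1[of x "-y" z] ip_neg1 by simp

lemmas ip_simps = ip_add1 ip_add2 ip_diff1 ip_diff2 ip_neg1 ip_neg2 ip_scale1 ip_scale2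

lemma ip_self_eq0[simp]: "ip x x = 0 \<longleftrightarrow> x = 0"
  using ip_def0 by auto

lemma orth_swap: "ip x y = 0 \<Longrightarrow> ip y x = 0"
  by (metis ip_cnj complex_cnj_zero)

lemma subspace_orth: "subspace (orth ip S)"
  unfolding subspace_def orth_def by (auto simp: ip_simps)

lemma orth_mono: "S \<subseteq> T \<Longrightarrow> orth ip T \<subseteq> orth ip S"
  unfolding orth_def by auto

lemma orth_span: "orth ip (span S) = orth ip S"
proof
  show "orth ip (span S) \<subseteq> orth ip S" by (rule orth_mono[OF span_superset])
  show "orth ip S \<subseteq> orth ip (span S)"
  proof
    fix x assume x: "x \<in> orth ip S"
    have "subspace {y. ip y x = 0}"
      unfolding subspace_def by (auto simp: ip_simps)
    moreover have "S \<subseteq> {y. ip y x = 0}" using x unfolding orth_def by auto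
    ultimately have "span S \<subseteq> {y. ip y x = 0}" by (rule span_minimal[rotated])
    then show "x \<in> orth ip (span S)" unfolding orth_def by auto
  qed
qed

lemma orthD: "x \<in> orth ip S \<Longrightarrow> y \<in> S \<Longrightarrow> ip y x = 0"
  unfolding orth_def by auto

lemma orthD': "x \<in> orth ip S \<Longrightarrow> y \<in> S \<Longrightarrow> ip x y = 0"
  unfolding orth_def by (auto intro: orth_swap)

lemma decomp_span:
  assumes "finite B"
  shows "\<forall>x. \<exists>e\<in>span B. x - e \<in> orth ip (span B)"
  using assms
proof (induction B rule: finite_induct)
  case empty
  then show ?case by (auto simp: orth_def)
next
  case (insert b B)
  obtain eb where eb: "eb \<in> span B" "b - eb \<in> orth ip (span B)"
    using insert.IH by blast
  define c where "c = b - eb"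
  show ?case
  proof (cases "c = 0")
    case True
    then have "b \<in> span B" using eb c_def by simp
    then have "span (insert b B) = span B" by (rule span_redundant)
    then show ?thesis using insert.IH by simp
  next
    case False
    show ?thesis
    proof
      fix x
      obtain ex where ex: "ex \<in> span B" "x - ex \<in> orth ip (span B)"
        using insert.IH by blast
      define \<alpha> where "\<alpha> = ip c x / ip c c"
      define e where "e = ex + sc \<alpha> c"
      have cB: "c \<in> orth ip (span B)" using eb c_def by simp
      have sub: "span B \<subseteq> span (insert b B)" by (rule span_mono) auto
      have csp: "c \<in> span (insert b B)"
        unfolding c_def using sub eb(1) by (intro span_diff) (auto intro: span_base)
      have "e \<in> span (insert b B)" unfolding e_def
        using sub ex(1) csp by (intro span_add span_scale) auto
      moreover have "x - e \<in> orth ip (span (insert b B))"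
        unfolding orth_span
      proof (unfold orth_def, intro CollectI ballI)
        have o1: "ip y (x - e) = 0" if "y \<in> span B" for y
        proof -
          have "ip y (x - e) = ip y (x - ex) - \<alpha> * ip y c"
            unfolding e_def by (simp add: ip_simps algebra_simps)
          then show ?thesis using orthD[OF ex(2) that] orthD[OF cB that] by simp
        qed
        have o2: "ip c (x - e) = 0"
        proof -
          have "ip c ex = 0" using orthD'[OF cB ex(1)] .
          then have "ip c (x - e) = ip c x - \<alpha> * ip c c"
            unfolding e_def by (simp add: ip_simps algebra_simps)
          then show ?thesis unfolding \<alpha>_def using False by simp
        qed
        fix y assume y: "y \<in> insert b B"
        show "ip y (x - e) = 0"
        proof (cases "y = b")
          case True
          then have "y = c + eb" unfolding c_def by simp
          then show ?thesis using o1[OF eb(1)] o2 by (simp add: ip_simps)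
        next
          case False
          then have "y \<in> span B" using y by (auto intro: span_base)
          then show ?thesis using o1 by blast
        qed
      qed
      ultimately show "\<exists>e\<in>span (insert b B). x - e \<in> orth ip (span (insert b B))" by blast
    qed
  qed
qed

end

context hsp begin

definition fd :: "'a set \<Rightarrow> bool" where "fd S \<longleftrightarrow> (\<exists>B. finite B \<and> span B = S)"

lemma fd_subspace: "fd S \<Longrightarrow> subspace S"
  unfolding fd_def by auto

lemma fd_span: "finite B \<Longrightarrow> fd (span B)"
  unfolding fd_def by auto

lemma fd_basis:
  assumes "fd S"
  obtains C where "C \<subseteq> S" "independent C" "finite C" "span C = S" "card C = dim S"
proof -
  obtain B where B: "finite B" "span B = S" using assms unfolding fd_def by auto
  obtain C where C: "C \<subseteq> S" "independent C" "S \<subseteq> span C" "card C = dim S"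
    using basis_exists by blast
  have "finite C" using independent_span_bound[OF B(1) C(2)] C(1) B(2) by auto
  moreover have "span C = S"
    using span_subspace[OF C(1) C(3)] B(2) subspace_span by blast
  ultimately show ?thesis using C that by blast
qed

lemma fd_sub:
  assumes "fd T" "subspace S" "S \<subseteq> T"
  shows "fd S"
proof -
  obtain B where B: "finite B" "span B = T" using assms unfolding fd_def by auto
  obtain C where C: "C \<subseteq> S" "independent C" "S \<subseteq> span C" "card C = dim S"
    using basis_exists by blast
  have "finite C" using independent_span_bound[OF B(1) C(2)] C(1) B(2) assms(3) span_superset
    by blast
  moreover have "span C = S"
    using C assms(2) span_subspace by blast
  ultimately show ?thesis unfolding fd_def by blast
qed

lemma fd_image:
  assumes "Vector_Spaces.linear sc sc f" "fd S"
  shows "fd (f ` S)"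
proof -
  interpret f: Vector_Spaces.linear sc sc f by fact
  obtain B where B: "finite B" "span B = S" using assms unfolding fd_def by auto
  have "span (f ` B) = f ` S" using f.span_image B by simp
  then show ?thesis using B unfolding fd_def by blast
qed

lemma fd_Un:
  assumes "fd S" "fd T"
  shows "fd (span (S \<union> T))"
proof -
  obtain B where B: "finite B" "span B = S" using assms unfolding fd_def by auto
  obtain C where C: "finite C" "span C = T" using assms unfolding fd_def by auto
  have "span (S \<union> T) = span (B \<union> C)"
    unfolding span_eq
  proof
    show "S \<union> T \<subseteq> span (B \<union> C)" using B C span_mono[of B "B \<union> C"] span_mono[of C "B \<union> C"] by auto
    show "B \<union> C \<subseteq> span (S \<union> T)" using B C span_superset[of B] span_superset[of C]
        span_superset[of "S \<union> T"] by blast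
  qed
  then show ?thesis using B C unfolding fd_def by auto
qed

lemma dim_mono_fd:
  assumes "fd T" "S \<subseteq> T"
  shows "dim S \<le> dim T"
proof -
  obtain C where C: "C \<subseteq> T" "independent C" "finite C" "span C = T" "card C = dim T"
    using fd_basis[OF assms(1)] by blast
  show ?thesis using dim_le_card[of S C] C assms by auto
qed

lemma dim_eq_fd:
  assumes "fd T" "subspace S" "S \<subseteq> T" "dim T \<le> dim S"
  shows "S = T"
proof -
  have fS: "fd S" using fd_sub assms by blast
  obtain CS where CS: "CS \<subseteq> S" "independent CS" "finite CS" "span CS = S" "card CS = dim S"
    using fd_basis[OF fS] by blast
  obtain CT where CT: "CS \<subseteq> CT" "CT \<subseteq> T" "independent CT" "T \<subseteq> span CT"
    using maximal_independent_subset_extend[of CS T] CS assms(3) by blast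
  obtain B where B: "finite B" "span B = T" using assms unfolding fd_def by auto
  have fCT: "finite CT" using independent_span_bound[OF B(1) CT(3)] CT(2) B(2) span_superset
    by blast
  have "card CT = dim T" using basis_card_eq_dim CT by blast
  then have "CS = CT" using card_subset_eq[OF fCT CT(1)] CS(5) assms(4)
      card_mono[OF fCT CT(1)] by simp
  then have "T \<subseteq> S" using CT CS by simp
  then show ?thesis using assms(3) by blast
qed

lemma dim0_fd:
  assumes "fd S" "dim S = 0"
  shows "S \<subseteq> {0}"
proof -
  obtain C where C: "C \<subseteq> S" "independent C" "finite C" "span C = S" "card C = dim S"
    using fd_basis[OF assms(1)] by blast
  then have "C = {}" using assms by simp
  then show ?thesis using C by simp
qed

lemma dim_zero_set: "S \<subseteq> {0} \<Longrightarrow> dim S = 0"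
  using dim_le_card[of S "{}"] by simp

lemma dim_Un_le:
  assumes "fd S" "fd T"
  shows "dim (span (S \<union> T)) \<le> dim S + dim T"
proof -
  obtain C where C: "C \<subseteq> S" "independent C" "finite C" "span C = S" "card C = dim S"
    using fd_basis[OF assms(1)] by blast
  obtain D where D: "D \<subseteq> T" "independent D" "finite D" "span D = T" "card D = dim T"
    using fd_basis[OF assms(2)] by blast
  have "S \<union> T \<subseteq> span (C \<union> D)"
    using C D span_mono[of C "C \<union> D"] span_mono[of D "C \<union> D"] by auto
  then have "span (S \<union> T) \<subseteq> span (C \<union> D)"
    using span_minimal subspace_span by blast
  then have "dim (span (S \<union> T)) \<le> card (C \<union> D)" using dim_le_card C D by blast
  also have "\<dots> \<le> card C + card D" by (rule card_Un_le)
  finally show ?thesis using C D by simp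
qed

lemma disj_span:
  assumes "independent (A \<union> B)" "A \<inter> B = {}" "finite A" "finite B"
    "x \<in> span A" "x \<in> span B"
  shows "x = 0"
proof -
  obtain a where a: "x = (\<Sum>v\<in>A. sc (a v) v)" using assms(5) span_finite[OF assms(3)] by auto
  obtain b where b: "x = (\<Sum>v\<in>B. sc (b v) v)" using assms(6) span_finite[OF assms(4)] by auto
  define c where "c v = (if v \<in> A then a v else - b v)" for v
  have "(\<Sum>v\<in>A \<union> B. sc (c v) v) = (\<Sum>v\<in>A. sc (c v) v) + (\<Sum>v\<in>B. sc (c v) v)"
    using assms by (simp add: sum.union_disjoint)
  also have "(\<Sum>v\<in>A. sc (c v) v) = x" unfolding a c_def by simp
  also have "(\<Sum>v\<in>B. sc (c v) v) = (\<Sum>v\<in>B. - sc (b v) v)"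
    by (rule sum.cong) (use assms(2) in \<open>auto simp: c_def scale_minus_left\<close>)
  also have "\<dots> = - x" unfolding b by (simp add: sum_negf)
  finally have "(\<Sum>v\<in>A \<union> B. sc (c v) v) = 0" by simp
  then have "\<forall>v\<in>A. c v = 0"
    using independentD[OF assms(1), of "A \<union> B" c] assms by auto
  then show ?thesis unfolding a c_def by simp
qed

end

context hsp begin

lemma rank_nullity:
  assumes lin: "Vector_Spaces.linear sc sc T" and fS: "fd S"
  shows "dim S = dim (T ` S) + dim {x \<in> S. T x = 0}"
proof -
  interpret T: Vector_Spaces.linear sc sc T by fact
  define K where "K = {x \<in> S. T x = 0}"
  have sS: "subspace S" using fd_subspace fS by blast
  have "K = S \<inter> {x. T x = 0}" unfolding K_def by auto
  then have sK: "subspace K" using subspace_inter[OF sS T.subspace_kernel] by simp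
  have KS: "K \<subseteq> S" unfolding K_def by auto
  obtain BK where BK: "BK \<subseteq> K" "independent BK" "K \<subseteq> span BK" "card BK = dim K"
    using basis_exists by blast
  obtain BS where BS: "BK \<subseteq> BS" "BS \<subseteq> S" "independent BS" "S \<subseteq> span BS"
    using maximal_independent_subset_extend[of BK S] BK KS by blast
  obtain B0 where B0: "finite B0" "span B0 = S" using fS unfolding fd_def by auto
  have fBS: "finite BS"
    using independent_span_bound[OF B0(1) BS(3)] BS(2) B0(2) by blast
  have cBS: "card BS = dim S" using basis_card_eq_dim BS by blast
  define C where "C = BS - BK"
  have fC: "finite C" "finite BK" using fBS BS(1) C_def finite_subset by auto
  have spC: "span C \<subseteq> S" using BS(2) sS span_minimal C_def by blast
  have inj: "inj_on T (span C)"
    unfolding T.inj_on_iff_eq_0[OF subspace_span]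
  proof (intro ballI impI)
    fix x assume x: "x \<in> span C" "T x = 0"
    then have "x \<in> K" using spC K_def by auto
    then have "x \<in> span BK" using BK by blast
    moreover have "C \<union> BK = BS" using BS(1) C_def by blast
    then have "independent (C \<union> BK)" using BS(3) by simp
    ultimately show "x = 0"
      using disj_span[of C BK x] fC x(1) C_def by auto
  qed
  have "independent C" using independent_mono[OF BS(3)] C_def by blast
  then have indTC: "independent (T ` C)"
    using T.independent_injective_image[OF _ inj] by blast
  have injC: "inj_on T C" using inj span_superset inj_on_subset by blast
  have TS: "T ` S \<subseteq> span (T ` C)"
  proof -
    have "T ` S \<subseteq> T ` span BS" using BS(4) by blast
    also have "\<dots> = span (T ` BS)" using T.span_image by simp
    also have "\<dots> \<subseteq> span (T ` C)"
    proof (rule span_minimal[OF _ subspace_span])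
      show "T ` BS \<subseteq> span (T ` C)"
      proof
        fix y assume "y \<in> T ` BS"
        then obtain b where b: "b \<in> BS" "y = T b" by blast
        show "y \<in> span (T ` C)"
        proof (cases "b \<in> BK")
          case True
          then have "b \<in> K" using BK(1) by blast
          then have "T b = 0" unfolding K_def by simp
          then show ?thesis using b span_zero by simp
        next
          case False
          then have "b \<in> C" using b(1) unfolding C_def by simp
          then have "T b \<in> T ` C" by (rule imageI)
          then show ?thesis using b(2) span_base by simp
        qed
      qed
    qed
    finally show ?thesis .
  qed
  have "C \<subseteq> S" using BS(2) unfolding C_def by auto
  then have "T ` C \<subseteq> T ` S" by (rule image_mono)
  then have "card (T ` C) = dim (T ` S)" using basis_card_eq_dim[OF _ TS indTC] by blast
  moreover have "card (T ` C) = card C" using card_image[OF injC] .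
  moreover have "card C = card BS - card BK" unfolding C_def
    using card_Diff_subset[OF fC(2) BS(1)] .
  moreover have "card BK \<le> card BS" using card_mono[OF fBS BS(1)] .
  ultimately have "dim S = dim (T ` S) + dim K" using cBS BK(4) by linarith
  then show ?thesis unfolding K_def .
qed

end

context hsp begin

lemma lin_iff: "Vector_Spaces.linear sc sc f \<longleftrightarrow> (\<forall>x y. f (x + y) = f x + f y) \<and> (\<forall>c x. f (sc c x) = sc c (f x))"
  using Vector_Spaces.linear_iff[of sc sc f] vector_space_axioms by simp

lemma lin_sub:
  assumes "Vector_Spaces.linear sc sc f" "Vector_Spaces.linear sc sc g"
  shows "Vector_Spaces.linear sc sc (\<lambda>x. f x - g x)"
  using assms unfolding lin_iff by (simp add: scale_right_diff_distrib algebra_simps)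

lemma lin_id: "Vector_Spaces.linear sc sc (\<lambda>x. x)"
  unfolding lin_iff by simp

lemma fin_dim_iff: "fin_dim_subspace sc E \<longleftrightarrow> fd E"
  unfolding fin_dim_subspace_def fd_def by (auto)

lemma fd_decomp:
  assumes "fd S" shows "\<exists>e\<in>S. x - e \<in> orth ip S"
proof -
  obtain B where B: "finite B" "span B = S" using assms unfolding fd_def by auto
  show ?thesis using decomp_span[OF B(1)] B(2) by blast
qed

lemma orth_orth:
  assumes "fd S" "x \<in> orth ip (orth ip S)"
  shows "x \<in> S"
proof -
  obtain e where e: "e \<in> S" "x - e \<in> orth ip S" using fd_decomp[OF assms(1)] by blast
  define t where "t = x - e"
  have "ip t x = 0" using orthD[OF assms(2)] e(2) t_def by simp
  moreover have "ip t e = 0" using orthD'[OF e(2) e(1)] t_def by simp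
  moreover have "x = e + t" using t_def by simp
  ultimately have "ip t t = 0" by (simp add: ip_simps)
  then have "t = 0" by simp
  then show ?thesis using e t_def by simp
qed

lemma in_orth_self: "x \<in> S \<Longrightarrow> x \<in> orth ip S \<Longrightarrow> x = 0"
  using orthD[of x S x] by simp

lemma orth_pyth:
  assumes "a \<in> S" "a' \<in> S" "b \<in> orth ip S" "b' \<in> orth ip S"
  shows "ip (a + b) (a' + b') = ip a a' + ip b b'"
  using orthD[OF assms(4) assms(1)] orthD'[OF assms(3) assms(2)] by (simp add: ip_simps)

lemma range_eq_image:
  assumes "fd E" "Vector_Spaces.linear sc sc D" "\<And>x. x \<in> orth ip E \<Longrightarrow> D x = 0"
  shows "range D = D ` E"
proof -
  interpret D: Vector_Spaces.linear sc sc D by fact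
  have "D x \<in> D ` E" for x
  proof -
    obtain e where e: "e \<in> E" "x - e \<in> orth ip E" using fd_decomp[OF assms(1)] by blast
    have "D x = D e + D (x - e)" using D.add[of e "x - e"] by simp
    then have "D x = D e" using assms(3)[OF e(2)] by simp
    then show ?thesis using e(1) by blast
  qed
  then show ?thesis by blast
qed

lemma unitary_lin: "unitary_op sc ip u \<Longrightarrow> Vector_Spaces.linear sc sc u"
  unfolding unitary_op_def by simp

lemma unitary_ip: "unitary_op sc ip u \<Longrightarrow> ip (u x) (u y) = ip x y"
  unfolding unitary_op_def by simp

lemma unitary_surj: "unitary_op sc ip u \<Longrightarrow> \<exists>w. t = u w"
  unfolding unitary_op_def by (metis bij_pointE)

lemma diff_range_fd:
  assumes "fd E" "unitary_op sc ip u" "unitary_op sc ip v" "fixes_perp ip u E" "fixes_perp ip v E"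
  shows "fd (range (\<lambda>x. u x - v x))" "range (\<lambda>x. u x - v x) = (\<lambda>x. u x - v x) ` E"
proof -
  have lin: "Vector_Spaces.linear sc sc (\<lambda>x. u x - v x)"
    using lin_sub unitary_lin assms by blast
  show eq: "range (\<lambda>x. u x - v x) = (\<lambda>x. u x - v x) ` E"
    using range_eq_image[OF assms(1) lin] assms(4,5) unfolding fixes_perp_def by simp
  show "fd (range (\<lambda>x. u x - v x))"
    unfolding eq using fd_image[OF lin assms(1)] .
qed

end

context hsp begin

lemma fixes_perp_mono: "fixes_perp ip u E \<Longrightarrow> E \<subseteq> E' \<Longrightarrow> fixes_perp ip u E'"
  unfolding fixes_perp_def using orth_mono by blast

lemma U0_fd:
  assumes "u \<in> U0 sc ip" "v \<in> U0 sc ip"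
  shows "fd (range (\<lambda>x. u x - v x))"
proof -
  obtain E1 where E1: "fd E1" "fixes_perp ip u E1" "unitary_op sc ip u"
    using assms(1) unfolding U0_def fin_dim_iff by blast
  obtain E2 where E2: "fd E2" "fixes_perp ip v E2" "unitary_op sc ip v"
    using assms(2) unfolding U0_def fin_dim_iff by blast
  define E where "E = span (E1 \<union> E2)"
  have fE: "fd E" unfolding E_def using fd_Un E1(1) E2(1) .
  have "E1 \<subseteq> E" "E2 \<subseteq> E" unfolding E_def using span_superset by blast+
  then have "fixes_perp ip u E" "fixes_perp ip v E" using fixes_perp_mono E1 E2 by blast+
  then show ?thesis using diff_range_fd(1)[OF fE E1(3) E2(3)] by blast
qed

lemma range_swap: "Vector_Spaces.linear sc sc (\<lambda>x. u x - v x) \<Longrightarrow>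
  range (\<lambda>x. v x - u x) = range (\<lambda>x. u x - v x)"
proof -
  assume l: "Vector_Spaces.linear sc sc (\<lambda>x. u x - v x)"
  interpret L: Vector_Spaces.linear sc sc "\<lambda>x. u x - v x" by fact
  have e: "v x - u x = u (- x) - v (- x)" for x
    using L.neg[of x] by (simp add: algebra_simps)
  show ?thesis
  proof
    show "range (\<lambda>x. v x - u x) \<subseteq> range (\<lambda>x. u x - v x)" using e by blast
    show "range (\<lambda>x. u x - v x) \<subseteq> range (\<lambda>x. v x - u x)"
    proof
      fix y assume "y \<in> range (\<lambda>x. u x - v x)"
      then obtain x where "y = u x - v x" by blast
      then have "y = v (- x) - u (- x)" using e[of "- x"] by simp
      then show "y \<in> range (\<lambda>x. v x - u x)" by blast
    qed
  qed
qed

lemma part1: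
  assumes u: "u \<in> U0 sc ip" and v: "v \<in> U0 sc ip"
  shows "fin_dim_subspace sc (range (\<lambda>x. u x - v x)) \<and>
        (dist_rank sc u v = 0 \<longleftrightarrow> u = v) \<and>
        dist_rank sc u v = dist_rank sc v u \<and>
        (\<forall>w\<in>U0 sc ip. dist_rank sc u w \<le> dist_rank sc u v + dist_rank sc v w)"
proof (intro conjI ballI)
  have fuv: "fd (range (\<lambda>x. u x - v x))" using U0_fd[OF u v] .
  then show "fin_dim_subspace sc (range (\<lambda>x. u x - v x))" unfolding fin_dim_iff .
  have uu: "unitary_op sc ip u" "unitary_op sc ip v" using u v unfolding U0_def by auto
  have lin: "Vector_Spaces.linear sc sc (\<lambda>x. u x - v x)" using lin_sub unitary_lin uu by blast
  show "dist_rank sc u v = 0 \<longleftrightarrow> u = v"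
  proof
    assume "dist_rank sc u v = 0"
    then have "range (\<lambda>x. u x - v x) \<subseteq> {0}" using dim0_fd[OF fuv] unfolding dist_rank_def by simp
    moreover have "u x - v x \<in> range (\<lambda>x. u x - v x)" for x by (rule rangeI)
    ultimately have "u x - v x = 0" for x by (meson singletonD subsetD)
    then show "u = v" by (auto simp: fun_eq_iff)
  next
    assume "u = v"
    then show "dist_rank sc u v = 0" unfolding dist_rank_def using dim_zero_set[of "range (\<lambda>x. v x - v x)"]
      by simp
  qed
  show "dist_rank sc u v = dist_rank sc v u" unfolding dist_rank_def using range_swap[OF lin] by simp
  fix w assume w: "w \<in> U0 sc ip"
  have fvw: "fd (range (\<lambda>x. v x - w x))" using U0_fd[OF v w] .
  have fuw: "fd (range (\<lambda>x. u x - w x))" using U0_fd[OF u w] .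
  have "range (\<lambda>x. u x - w x) \<subseteq> span (range (\<lambda>x. u x - v x) \<union> range (\<lambda>x. v x - w x))"
  proof
    fix y assume "y \<in> range (\<lambda>x. u x - w x)"
    then obtain x where x: "y = u x - w x" by blast
    have "u x - v x \<in> span (range (\<lambda>x. u x - v x) \<union> range (\<lambda>x. v x - w x))"
      by (rule span_base) blast
    moreover have "v x - w x \<in> span (range (\<lambda>x. u x - v x) \<union> range (\<lambda>x. v x - w x))"
      by (rule span_base) blast
    ultimately have "(u x - v x) + (v x - w x) \<in> span (range (\<lambda>x. u x - v x) \<union> range (\<lambda>x. v x - w x))"
      by (rule span_add)
    then show "y \<in> span (range (\<lambda>x. u x - v x) \<union> range (\<lambda>x. v x - w x))" using x by simp
  qed
  then have "dim (range (\<lambda>x. u x - w x)) \<le> dim (span (range (\<lambda>x. u x - v x) \<union> range (\<lambda>x. v x - w x)))"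
    using dim_mono_fd fd_Un[OF fuv fvw] by blast
  also have "\<dots> \<le> dim (range (\<lambda>x. u x - v x)) + dim (range (\<lambda>x. v x - w x))"
    using dim_Un_le[OF fuv fvw] .
  finally show "dist_rank sc u w \<le> dist_rank sc u v + dist_rank sc v w" unfolding dist_rank_def .
qed

end


locale p2 = hsp sc ip for sc :: "complex \<Rightarrow> 'a::ab_group_add \<Rightarrow> 'a" and ip +
  fixes E F u
  assumes fE: "fd E" and fF: "fd F" and FE: "F \<subseteq> E" and uu: "unitary_op sc ip u"
    and uE: "fixes_perp ip u E"
begin

definition V where "V = (\<lambda>x. u x - x) ` orth ip F"
definition G where "G = E \<inter> orth ip F"

lemma ulin: "Vector_Spaces.linear sc sc u" using unitary_lin[OF uu] .
lemma uip: "ip (u x) (u y) = ip x y" using unitary_ip[OF uu] .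
lemma uadd: "u (x + y) = u x + u y" using ulin unfolding lin_iff by simp
lemma uscale: "u (sc c x) = sc c (u x)" using ulin unfolding lin_iff by simp
lemma udiff: "u (x - y) = u x - u y"
proof -
  interpret U: Vector_Spaces.linear sc sc u by (rule ulin)
  show ?thesis by (rule U.diff)
qed

lemma lin1: "Vector_Spaces.linear sc sc (\<lambda>x. u x - x)"
  using lin_sub[OF ulin lin_id] .

lemma sF: "subspace F" using fd_subspace[OF fF] .
lemma sE: "subspace E" using fd_subspace[OF fE] .
lemma oEF: "orth ip E \<subseteq> orth ip F" using orth_mono[OF FE] .

lemma fixE: "x \<in> orth ip E \<Longrightarrow> u x = x" using uE unfolding fixes_perp_def by blast

lemma V_G: "V = (\<lambda>x. u x - x) ` G"
proof
  show "(\<lambda>x. u x - x) ` G \<subseteq> V" unfolding V_def G_def by blast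
  show "V \<subseteq> (\<lambda>x. u x - x) ` G"
  proof
    fix y assume "y \<in> V"
    then obtain x where x: "x \<in> orth ip F" "y = u x - x" unfolding V_def by blast
    obtain e where e: "e \<in> E" "x - e \<in> orth ip E" using fd_decomp[OF fE] by blast
    have ue: "u (x - e) = x - e" using fixE[OF e(2)] .
    have "x - e \<in> orth ip F" using e(2) oEF by blast
    then have "x - (x - e) \<in> orth ip F" using subspace_diff[OF subspace_orth x(1)] by blast
    then have "e \<in> orth ip F" by simp
    then have eG: "e \<in> G" unfolding G_def using e(1) by blast
    have "u x - x = u e - e" using ue udiff[of x e] by (simp add: algebra_simps)
    then show "y \<in> (\<lambda>x. u x - x) ` G" using x(2) eG by blast
  qed
qed

lemma sG: "subspace G" unfolding G_def using subspace_inter[OF sE subspace_orth] .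
lemma fG: "fd G" using fd_sub[OF fE sG] unfolding G_def by blast
lemma fV: "fd V" unfolding V_G using fd_image[OF lin1 fG] .
lemma sV: "subspace V" using fd_subspace[OF fV] .

lemma FV0: assumes "v \<in> F" "v \<in> V" shows "v = 0"
proof -
  obtain x where x: "x \<in> orth ip F" "v = u x - x" using assms(2) unfolding V_def by blast
  have "u x = x + v" using x(2) by simp
  then have "ip x x = ip (x + v) (x + v)" using uip[of x x] by simp
  also have "\<dots> = ip x x + ip v v"
    using orth_pyth[OF assms(1) assms(1) x(1) x(1)] by (simp add: add.commute)
  finally have "ip v v = 0" by simp
  then show ?thesis by simp
qed

lemma key_orth:
  assumes t: "t \<in> orth ip F" "t \<in> orth ip V" and f: "f \<in> F"
  shows "ip t (u f) = 0"
proof -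
  obtain w where w: "t = u w" using unitary_surj[OF uu] by blast
  have wtx: "ip (w - t) x = 0" if x: "x \<in> orth ip F" for x
  proof -
    have "u x - x \<in> V" unfolding V_def using x by blast
    then have "ip t (u x - x) = 0" using orthD'[OF t(2)] by blast
    then have "ip t (u x) = ip t x" by (simp add: ip_simps)
    moreover have "ip t (u x) = ip w x" using w uip by simp
    ultimately show ?thesis by (simp add: ip_simps)
  qed
  have "w - t \<in> orth ip (orth ip F)"
    unfolding orth_def[of ip "orth ip F"]
  proof (intro CollectI ballI)
    fix y assume "y \<in> orth ip F"
    then show "ip y (w - t) = 0" using wtx orth_swap by blast
  qed
  then have z: "w - t \<in> F" by (rule orth_orth[OF fF])
  have "ip t t = ip (u w) (u w)" by (simp only: w)
  also have "\<dots> = ip w w" by (rule uip)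
  also have "\<dots> = ip ((w - t) + t) ((w - t) + t)" by (simp only: diff_add_cancel)
  also have "\<dots> = ip (w - t) (w - t) + ip t t"
    using orth_pyth[OF z z t(1) t(1)] .
  finally have "ip t t = ip (w - t) (w - t) + ip t t" .
  then have "ip (w - t) (w - t) = 0" by simp
  then have wt: "w = t" by simp
  have "ip t (u f) = ip (u w) (u f)" by (simp only: w)
  also have "\<dots> = ip w f" by (rule uip)
  finally have "ip t (u f) = ip t f" using wt by simp
  also have "\<dots> = 0" using orthD'[OF t(1) f] .
  finally show ?thesis .
qed

lemma uF: assumes f: "f \<in> F" shows "u f \<in> span (F \<union> V)"
proof -
  have fW: "fd (span (F \<union> V))" using fd_Un[OF fF fV] .
  obtain s where s: "s \<in> span (F \<union> V)" "u f - s \<in> orth ip (span (F \<union> V))"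
    using fd_decomp[OF fW] by blast
  define t where "t = u f - s"
  have tW: "t \<in> orth ip (F \<union> V)" using s(2) t_def orth_span by simp
  have "t \<in> orth ip F" "t \<in> orth ip V" using tW orth_mono[of F "F \<union> V"] orth_mono[of V "F \<union> V"]
    by blast+
  then have "ip t (u f) = 0" using key_orth f by blast
  moreover have "ip t s = 0" using orthD'[OF s(2) s(1)] t_def by simp
  moreover have "u f = s + t" using t_def by simp
  ultimately have "ip t t = 0" by (simp add: ip_simps)
  then have "t = 0" by simp
  then show ?thesis using s(1) t_def by simp
qed

lemma span_FV: assumes "x \<in> span (F \<union> V)" shows "\<exists>a\<in>F. \<exists>b\<in>V. x = a + b"
proof -
  have e1: "span F = F" "span V = V" using sF sV by simp_all
  show ?thesis using assms unfolding span_Un[of F V] e1 by blast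
qed

lemma p_ex: "\<exists>z. z - x \<in> F \<and> u x - z \<in> V"
proof -
  obtain f where f: "f \<in> F" "x - f \<in> orth ip F" using fd_decomp[OF fF] by blast
  define y where "y = x - f"
  obtain a b where ab: "a \<in> F" "b \<in> V" "u f = a + b" using span_FV[OF uF[OF f(1)]] by blast
  have x: "x = f + y" using y_def by simp
  have "u y - y \<in> V" unfolding V_def using f(2) y_def by blast
  then have hV: "b + (u y - y) \<in> V" using subspace_add[OF sV ab(2)] by blast
  have heq: "u x - (a + y) = b + (u y - y)" using x ab(3) uadd[of f y] by (simp add: algebra_simps)
  have heq2: "(a + y) - x = a - f" using x by simp
  have hF: "a - f \<in> F" using subspace_diff[OF sF ab(1) f(1)] .
  have "(a + y) - x \<in> F" unfolding heq2 by (rule hF)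
  moreover have "u x - (a + y) \<in> V" unfolding heq by (rule hV)
  ultimately have "(a + y) - x \<in> F \<and> u x - (a + y) \<in> V" by (rule conjI)
  then show ?thesis by (rule exI)
qed

lemma p_uniq:
  assumes "z - x \<in> F" "u x - z \<in> V" "z' - x \<in> F" "u x - z' \<in> V"
  shows "z = z'"
proof -
  have "z - z' = (z - x) - (z' - x)" by simp
  then have "z - z' \<in> F" using subspace_diff[OF sF assms(1) assms(3)] by simp
  moreover have "z - z' = (u x - z') - (u x - z)" by simp
  then have "z - z' \<in> V" using subspace_diff[OF sV assms(4) assms(2)] by simp
  ultimately have "z - z' = 0" using FV0 by blast
  then show ?thesis by simp
qed

definition p where "p x = (THE z. z - x \<in> F \<and> u x - z \<in> V)"

lemma p_prop: "p x - x \<in> F \<and> u x - p x \<in> V"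
proof -
  have "\<exists>!z. z - x \<in> F \<and> u x - z \<in> V" using p_ex p_uniq by blast
  then show ?thesis unfolding p_def by (rule theI')
qed

lemma p_eq: assumes "z - x \<in> F" "u x - z \<in> V" shows "p x = z"
  using p_uniq[OF _ _ assms] p_prop by blast

end

context p2 begin

lemma p_add: "p (x + y) = p x + p y"
proof (rule p_eq)
  have e: "(p x + p y) - (x + y) = (p x - x) + (p y - y)" by (simp add: algebra_simps)
  have "(p x - x) + (p y - y) \<in> F" using subspace_add[OF sF] p_prop by blast
  then show "(p x + p y) - (x + y) \<in> F" by (simp only: e)
  have e2: "u (x + y) - (p x + p y) = (u x - p x) + (u y - p y)" using uadd by (simp add: algebra_simps)
  have "(u x - p x) + (u y - p y) \<in> V" using subspace_add[OF sV] p_prop by blast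
  then show "u (x + y) - (p x + p y) \<in> V" by (simp only: e2)
qed

lemma p_scale: "p (sc c x) = sc c (p x)"
proof (rule p_eq)
  have e: "sc c (p x) - sc c x = sc c (p x - x)" by (simp add: scale_right_diff_distrib)
  have "sc c (p x - x) \<in> F" using subspace_scale[OF sF] p_prop by blast
  then show "sc c (p x) - sc c x \<in> F" by (simp only: e)
  have e2: "u (sc c x) - sc c (p x) = sc c (u x - p x)" using uscale by (simp add: scale_right_diff_distrib)
  have "sc c (u x - p x) \<in> V" using subspace_scale[OF sV] p_prop by blast
  then show "u (sc c x) - sc c (p x) \<in> V" by (simp only: e2)
qed

lemma plin: "Vector_Spaces.linear sc sc p"
  unfolding lin_iff using p_add p_scale by blast

lemma p_fix: assumes "x \<in> orth ip F" shows "p x = x"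
proof (rule p_eq)
  show "x - x \<in> F" using subspace_0[OF sF] by simp
  show "u x - x \<in> V" unfolding V_def using assms by blast
qed

lemma pF: assumes "f \<in> F" shows "p f \<in> F"
proof -
  have e: "p f = (p f - f) + f" by simp
  have "(p f - f) + f \<in> F" using subspace_add[OF sF] p_prop assms by blast
  then show ?thesis by (simp only: e[symmetric])
qed

lemma p_ipF: assumes f: "f \<in> F" "f' \<in> F" shows "ip (p f) (p f') = ip f f'"
proof -
  obtain g where g: "g \<in> orth ip F" "u f - p f = u g - g"
    using p_prop[of f] unfolding V_def by blast
  obtain g' where g': "g' \<in> orth ip F" "u f' - p f' = u g' - g'"
    using p_prop[of f'] unfolding V_def by blast
  have "u (f - g) = u f - u g" by (rule udiff)
  also have "\<dots> = (u f - p f) - (u g - g) + (p f + (- g))" by (simp add: algebra_simps)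
  also have "\<dots> = p f + (- g)" using g(2) by simp
  finally have e1: "u (f - g) = p f + (- g)" .
  have "u (f' - g') = u f' - u g'" by (rule udiff)
  also have "\<dots> = (u f' - p f') - (u g' - g') + (p f' + (- g'))" by (simp add: algebra_simps)
  also have "\<dots> = p f' + (- g')" using g'(2) by simp
  finally have e2: "u (f' - g') = p f' + (- g')" .
  have ng: "- g \<in> orth ip F" "- g' \<in> orth ip F" using subspace_neg[OF subspace_orth] g g' by blast+
  have "ip (p f) (p f') + ip (- g) (- g') = ip (p f + (- g)) (p f' + (- g'))"
    using orth_pyth[OF pF[OF f(1)] pF[OF f(2)] ng] by simp
  also have "\<dots> = ip (u (f - g)) (u (f' - g'))" using e1 e2 by simp
  also have "\<dots> = ip (f - g) (f' - g')" by (rule uip)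
  also have "\<dots> = ip (f + (- g)) (f' + (- g'))" by simp
  also have "\<dots> = ip f f' + ip (- g) (- g')" using orth_pyth[OF f ng] .
  finally show ?thesis by simp
qed

lemma p_ip: "ip (p x) (p y) = ip x y"
proof -
  obtain f where f: "f \<in> F" "x - f \<in> orth ip F" using fd_decomp[OF fF] by blast
  obtain f' where f': "f' \<in> F" "y - f' \<in> orth ip F" using fd_decomp[OF fF] by blast
  have px: "p x = p f + (x - f)" using p_add[of f "x - f"] p_fix[OF f(2)] by simp
  have py: "p y = p f' + (y - f')" using p_add[of f' "y - f'"] p_fix[OF f'(2)] by simp
  have "ip (p x) (p y) = ip (p f) (p f') + ip (x - f) (y - f')"
    unfolding px py using orth_pyth[OF pF[OF f(1)] pF[OF f'(1)] f(2) f'(2)] .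
  also have "\<dots> = ip f f' + ip (x - f) (y - f')" using p_ipF[OF f(1) f'(1)] by simp
  also have "\<dots> = ip (f + (x - f)) (f' + (y - f'))" using orth_pyth[OF f(1) f'(1) f(2) f'(2)] by simp
  finally show ?thesis by simp
qed

lemma p_zero: "p x = 0 \<Longrightarrow> x = 0"
  using p_ip[of x x] by simp

lemma p_inj: "inj p"
proof (rule injI)
  fix x y assume "p x = p y"
  interpret P: Vector_Spaces.linear sc sc p by (rule plin)
  have "p (x - y) = p x - p y" by (rule P.diff)
  then have "p (x - y) = 0" using \<open>p x = p y\<close> by simp
  then have "x - y = 0" by (rule p_zero)
  then show "x = y" by simp
qed

lemma pF_eq: "p ` F = F"
proof -
  interpret P: Vector_Spaces.linear sc sc p by (rule plin)
  have k: "{x \<in> F. p x = 0} \<subseteq> {0}" using p_zero by blast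
  have "dim F = dim (p ` F) + dim {x \<in> F. p x = 0}" using rank_nullity[OF plin fF] .
  then have "dim F \<le> dim (p ` F)" using dim_zero_set[OF k] by simp
  moreover have "subspace (p ` F)" using P.subspace_image[OF sF] .
  moreover have "p ` F \<subseteq> F" using pF by blast
  ultimately show ?thesis using dim_eq_fd[OF fF] by blast
qed

lemma p_surj: "surj p"
proof -
  have "y \<in> range p" for y
  proof -
    obtain f where f: "f \<in> F" "y - f \<in> orth ip F" using fd_decomp[OF fF] by blast
    obtain f' where f': "f' \<in> F" "f = p f'" using pF_eq f(1) by blast
    have "p (f' + (y - f)) = y" using p_add[of f' "y - f"] p_fix[OF f(2)] f'(2) by simp
    then show ?thesis by (metis rangeI)
  qed
  then show ?thesis by blast
qed

lemma p_unitary: "unitary_op sc ip p"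
  unfolding unitary_op_def using plin p_ip p_inj p_surj bij_def by blast

lemma p_fixes: "fixes_perp ip p F"
  unfolding fixes_perp_def using p_fix by blast

lemma p_range: "range (\<lambda>x. u x - p x) = V"
proof
  show "range (\<lambda>x. u x - p x) \<subseteq> V" using p_prop by blast
  show "V \<subseteq> range (\<lambda>x. u x - p x)"
  proof
    fix v assume "v \<in> V"
    then obtain x where x: "x \<in> orth ip F" "v = u x - x" unfolding V_def by blast
    then have "v = u x - p x" using p_fix by simp
    then show "v \<in> range (\<lambda>x. u x - p x)" by (rule range_eqI)
  qed
qed

lemma w_in_F: assumes "unitary_op sc ip w" "fixes_perp ip w F" "f \<in> F" shows "w f \<in> F"
proof -
  have "w f \<in> orth ip (orth ip F)"
    unfolding orth_def[of ip "orth ip F"]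
  proof (intro CollectI ballI)
    fix y assume y: "y \<in> orth ip F"
    have "w y = y" using assms(2) y unfolding fixes_perp_def by blast
    then have "ip y (w f) = ip (w y) (w f)" by simp
    also have "\<dots> = ip y f" using unitary_ip[OF assms(1)] .
    also have "\<dots> = 0" using orthD'[OF y assms(3)] .
    finally show "ip y (w f) = 0" .
  qed
  then show ?thesis by (rule orth_orth[OF fF])
qed

lemma w_eq:
  assumes "unitary_op sc ip w" "fixes_perp ip w F" "range (\<lambda>x. u x - w x) \<subseteq> V"
  shows "w = p"
proof
  fix x
  obtain f where f: "f \<in> F" "x - f \<in> orth ip F" using fd_decomp[OF fF] by blast
  have wl: "Vector_Spaces.linear sc sc w" using unitary_lin[OF assms(1)] .
  interpret W: Vector_Spaces.linear sc sc w by (rule wl)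
  have "w (x - f) = x - f" using assms(2) f(2) unfolding fixes_perp_def by blast
  then have "w x - w f = x - f" using W.diff[of x f] by simp
  then have wx: "w x = (x - f) + w f" by (simp add: diff_eq_eq)
  have "w x - x = w f - f" unfolding wx by (simp add: algebra_simps)
  then have h1: "w x - x \<in> F" using subspace_diff[OF sF w_in_F[OF assms(1,2) f(1)] f(1)] by simp
  have h2: "u x - w x \<in> V" using assms(3) by blast
  show "w x = p x" using p_eq[OF h1 h2] by simp
qed

lemma pi_eq: "pi_EF sc ip E F u = p"
  unfolding pi_EF_def V_def[symmetric]
proof (rule the_equality)
  show "unitary_op sc ip p \<and> fixes_perp ip p F \<and> range (\<lambda>x. u x - p x) \<subseteq> V"
    using p_unitary p_fixes p_range by blast
  show "\<And>w. unitary_op sc ip w \<and> fixes_perp ip w F \<and> range (\<lambda>x. u x - w x) \<subseteq> V \<Longrightarrow> w = p"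
    using w_eq by blast
qed

end

context p2 begin

definition Pr where "Pr x = (THE f. f \<in> F \<and> x - f \<in> orth ip F)"

lemma Pr_uniq: assumes "f \<in> F" "x - f \<in> orth ip F" "f' \<in> F" "x - f' \<in> orth ip F"
  shows "f = f'"
proof -
  have a: "f - f' \<in> F" using subspace_diff[OF sF assms(1,3)] .
  have e: "f - f' = (x - f') - (x - f)" by simp
  have "(x - f') - (x - f) \<in> orth ip F" using subspace_diff[OF subspace_orth assms(4,2)] .
  then have "f - f' \<in> orth ip F" by (simp only: e)
  then have "f - f' = 0" using in_orth_self[OF a] by blast
  then show ?thesis by simp
qed

lemma Pr_prop: "Pr x \<in> F \<and> x - Pr x \<in> orth ip F"
proof -
  have "\<exists>!f. f \<in> F \<and> x - f \<in> orth ip F" using fd_decomp[OF fF] Pr_uniq by blast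
  then show ?thesis unfolding Pr_def by (rule theI')
qed

lemma Pr_eq: "f \<in> F \<Longrightarrow> x - f \<in> orth ip F \<Longrightarrow> Pr x = f"
  using Pr_uniq Pr_prop by blast

lemma Pr_lin: "Vector_Spaces.linear sc sc Pr"
  unfolding lin_iff
proof (intro conjI allI)
  fix x y
  have e: "(x + y) - (Pr x + Pr y) = (x - Pr x) + (y - Pr y)" by (simp add: algebra_simps)
  have "(x - Pr x) + (y - Pr y) \<in> orth ip F" using subspace_add[OF subspace_orth] Pr_prop by blast
  then have "(x + y) - (Pr x + Pr y) \<in> orth ip F" by (simp only: e)
  moreover have "Pr x + Pr y \<in> F" using subspace_add[OF sF] Pr_prop by blast
  ultimately show "Pr (x + y) = Pr x + Pr y" using Pr_eq by blast
next
  fix c x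
  have e: "sc c x - sc c (Pr x) = sc c (x - Pr x)" by (simp add: scale_right_diff_distrib)
  have "sc c (x - Pr x) \<in> orth ip F" using subspace_scale[OF subspace_orth] Pr_prop by blast
  then have "sc c x - sc c (Pr x) \<in> orth ip F" by (simp only: e)
  moreover have "sc c (Pr x) \<in> F" using subspace_scale[OF sF] Pr_prop by blast
  ultimately show "Pr (sc c x) = sc c (Pr x)" using Pr_eq by blast
qed

lemma Pr_img: "Pr ` E = F"
proof
  show "Pr ` E \<subseteq> F" using Pr_prop by blast
  show "F \<subseteq> Pr ` E"
  proof
    fix f assume f: "f \<in> F"
    have "f - f \<in> orth ip F" using subspace_0[OF subspace_orth] by simp
    then have "Pr f = f" using Pr_eq f by blast
    moreover have "f \<in> E" using f FE by blast
    ultimately show "f \<in> Pr ` E" by (metis imageI)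
  qed
qed

lemma Pr_ker: "{x \<in> E. Pr x = 0} = G"
proof
  show "{x \<in> E. Pr x = 0} \<subseteq> G"
  proof
    fix x assume "x \<in> {x \<in> E. Pr x = 0}"
    then have x: "x \<in> E" "Pr x = 0" by auto
    have "x - Pr x \<in> orth ip F" using Pr_prop by blast
    then have "x \<in> orth ip F" using x(2) by simp
    then show "x \<in> G" unfolding G_def using x(1) by blast
  qed
  show "G \<subseteq> {x \<in> E. Pr x = 0}"
  proof
    fix x assume "x \<in> G"
    then have x: "x \<in> E" "x \<in> orth ip F" unfolding G_def by auto
    have "Pr x = 0" using Pr_eq[of 0 x] subspace_0[OF sF] x(2) by simp
    then show "x \<in> {x \<in> E. Pr x = 0}" using x(1) by blast
  qed
qed

lemma dimE: "dim E = dim F + dim G"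
  using rank_nullity[OF Pr_lin fE] unfolding Pr_img Pr_ker .

lemma dimG: "dim G = dim V + dim {x \<in> E \<inter> orth ip F. u x = x}"
proof -
  have k: "{x \<in> G. u x - x = 0} = {x \<in> E \<inter> orth ip F. u x = x}" unfolding G_def by auto
  show ?thesis using rank_nullity[OF lin1 fG] unfolding V_G[symmetric] k .
qed

lemma V_sub_w: assumes "fixes_perp ip w F" shows "V \<subseteq> range (\<lambda>x. u x - w x)"
proof
  fix v assume "v \<in> V"
  then obtain x where x: "x \<in> orth ip F" "v = u x - x" unfolding V_def by blast
  then have "v = u x - w x" using assms unfolding fixes_perp_def by simp
  then show "v \<in> range (\<lambda>x. u x - w x)" by (rule range_eqI)
qed

lemma fd_w: assumes "unitary_op sc ip w" "fixes_perp ip w F" shows "fd (range (\<lambda>x. u x - w x))"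
  using diff_range_fd(1)[OF fE uu assms(1) uE fixes_perp_mono[OF assms(2) FE]] .

lemma part2:
  "unitary_op sc ip p \<and> fixes_perp ip p F \<and>
   (\<forall>w. unitary_op sc ip w \<and> fixes_perp ip w F \<longrightarrow> dist_rank sc u p \<le> dist_rank sc u w) \<and>
   (\<forall>w. unitary_op sc ip w \<and> fixes_perp ip w F \<and> dist_rank sc u w \<le> dist_rank sc u p \<longrightarrow> w = p) \<and>
   range (\<lambda>x. u x - p x) = (\<lambda>x. u x - x) ` orth ip F \<and>
   int (dist_rank sc u p) = int (vector_space.dim sc E) - int (vector_space.dim sc F)
      - int (vector_space.dim sc {x \<in> E \<inter> orth ip F. u x = x}) \<and>
   ((\<forall>x\<in>E \<inter> orth ip F. u x = x \<longrightarrow> x = 0) \<longrightarrow>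
      int (dist_rank sc u p) = int (vector_space.dim sc E) - int (vector_space.dim sc F))"
proof -
  have dp: "dist_rank sc u p = dim V" unfolding dist_rank_def p_range ..
  have dw: "dist_rank sc u w = dim (range (\<lambda>x. u x - w x))" for w unfolding dist_rank_def ..
  have c3: "\<forall>w. unitary_op sc ip w \<and> fixes_perp ip w F \<longrightarrow> dist_rank sc u p \<le> dist_rank sc u w"
    unfolding dw p_range using dim_mono_fd[OF fd_w V_sub_w] by blast
  have c4: "\<forall>w. unitary_op sc ip w \<and> fixes_perp ip w F \<and> dist_rank sc u w \<le> dist_rank sc u p \<longrightarrow> w = p"
  proof (intro allI impI)
    fix w assume w: "unitary_op sc ip w \<and> fixes_perp ip w F \<and> dist_rank sc u w \<le> dist_rank sc u p"
    have "V = range (\<lambda>x. u x - w x)"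
      using dim_eq_fd[OF fd_w[of w] sV V_sub_w[of w]] w unfolding dw p_range by blast
    then show "w = p" using w_eq w by blast
  qed
  have c6: "int (dist_rank sc u p) = int (dim E) - int (dim F) - int (dim {x \<in> E \<inter> orth ip F. u x = x})"
    unfolding dp using dimE dimG by simp
  have c7: "(\<forall>x\<in>E \<inter> orth ip F. u x = x \<longrightarrow> x = 0) \<longrightarrow>
      int (dist_rank sc u p) = int (dim E) - int (dim F)"
  proof
    assume "\<forall>x\<in>E \<inter> orth ip F. u x = x \<longrightarrow> x = 0"
    then have "{x \<in> E \<inter> orth ip F. u x = x} \<subseteq> {0}" by blast
    then have "dim {x \<in> E \<inter> orth ip F. u x = x} = 0" by (rule dim_zero_set)
    then show "int (dist_rank sc u p) = int (dim E) - int (dim F)" using c6 by simp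
  qed
  show ?thesis using p_unitary p_fixes c3 c4 c6 c7 p_range V_def by simp
qed

end

theorem proposition2p2:
  fixes sc :: "complex \<Rightarrow> 'a::ab_group_add \<Rightarrow> 'a"
    and ip :: "'a \<Rightarrow> 'a \<Rightarrow> complex"
  assumes H: "complex_hilbert_space sc ip"
  shows
    "(\<forall>u\<in>U0 sc ip. \<forall>v\<in>U0 sc ip.
        fin_dim_subspace sc (range (\<lambda>x. u x - v x)) \<and>
        (dist_rank sc u v = 0 \<longleftrightarrow> u = v) \<and>
        dist_rank sc u v = dist_rank sc v u \<and>
        (\<forall>w\<in>U0 sc ip. dist_rank sc u w \<le> dist_rank sc u v + dist_rank sc v w))
     \<and>
     (\<forall>E F u. fin_dim_subspace sc E \<and> fin_dim_subspace sc F \<and> F \<subseteq> E \<and>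
        unitary_op sc ip u \<and> fixes_perp ip u E \<longrightarrow>
        (let p = pi_EF sc ip E F u in
          unitary_op sc ip p \<and> fixes_perp ip p F \<and>
          (\<forall>w. unitary_op sc ip w \<and> fixes_perp ip w F \<longrightarrow> dist_rank sc u p \<le> dist_rank sc u w) \<and>
          (\<forall>w. unitary_op sc ip w \<and> fixes_perp ip w F \<and> dist_rank sc u w \<le> dist_rank sc u p \<longrightarrow> w = p) \<and>
          range (\<lambda>x. u x - p x) = (\<lambda>x. u x - x) ` orth ip F \<and>
          int (dist_rank sc u p) = int (vector_space.dim sc E) - int (vector_space.dim sc F)
             - int (vector_space.dim sc {x \<in> E \<inter> orth ip F. u x = x}) \<and>
          ((\<forall>x\<in>E \<inter> orth ip F. u x = x \<longrightarrow> x = 0) \<longrightarrow>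
             int (dist_rank sc u p) = int (vector_space.dim sc E) - int (vector_space.dim sc F))))"
proof -
  have vs: "vector_space sc" using H unfolding complex_hilbert_space_def by (elim conjE)
  have a1: "\<forall>x y z. ip x (y + z) = ip x y + ip x z" using H unfolding complex_hilbert_space_def by (elim conjE)
  have a2: "\<forall>c x y. ip x (sc c y) = c * ip x y" using H unfolding complex_hilbert_space_def by (elim conjE)
  have a3: "\<forall>x y. ip y x = cnj (ip x y)" using H unfolding complex_hilbert_space_def by (elim conjE)
  have a5: "\<forall>x. ip x x = 0 \<longrightarrow> x = 0" using H unfolding complex_hilbert_space_def by (elim conjE)
  have Hs: "hsp sc ip" unfolding hsp_def hsp_axioms_def
    apply (intro conjI allI impI)
    subgoal by (rule vs)
    subgoal using a1 by blast
    subgoal using a2 by blast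
    subgoal using a3 by blast
    subgoal using a5 by blast
    done
  interpret hsp sc ip by (rule Hs)
  show ?thesis
  proof (intro conjI)
    show "\<forall>u\<in>U0 sc ip. \<forall>v\<in>U0 sc ip.
        fin_dim_subspace sc (range (\<lambda>x. u x - v x)) \<and>
        (dist_rank sc u v = 0 \<longleftrightarrow> u = v) \<and>
        dist_rank sc u v = dist_rank sc v u \<and>
        (\<forall>w\<in>U0 sc ip. dist_rank sc u w \<le> dist_rank sc u v + dist_rank sc v w)"
      by (intro ballI) (rule part1)
  next
    show "\<forall>E F u. fin_dim_subspace sc E \<and> fin_dim_subspace sc F \<and> F \<subseteq> E \<and>
        unitary_op sc ip u \<and> fixes_perp ip u E \<longrightarrow>
        (let p = pi_EF sc ip E F u in
          unitary_op sc ip p \<and> fixes_perp ip p F \<and>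
          (\<forall>w. unitary_op sc ip w \<and> fixes_perp ip w F \<longrightarrow> dist_rank sc u p \<le> dist_rank sc u w) \<and>
          (\<forall>w. unitary_op sc ip w \<and> fixes_perp ip w F \<and> dist_rank sc u w \<le> dist_rank sc u p \<longrightarrow> w = p) \<and>
          range (\<lambda>x. u x - p x) = (\<lambda>x. u x - x) ` orth ip F \<and>
          int (dist_rank sc u p) = int (vector_space.dim sc E) - int (vector_space.dim sc F)
             - int (vector_space.dim sc {x \<in> E \<inter> orth ip F. u x = x}) \<and>
          ((\<forall>x\<in>E \<inter> orth ip F. u x = x \<longrightarrow> x = 0) \<longrightarrow>
             int (dist_rank sc u p) = int (vector_space.dim sc E) - int (vector_space.dim sc F)))"
    proof (intro allI impI)
      fix E F u
      assume A: "fin_dim_subspace sc E \<and> fin_dim_subspace sc F \<and> F \<subseteq> E \<and>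
        unitary_op sc ip u \<and> fixes_perp ip u E"
      have A1: "fd E" "fd F" using A fin_dim_iff by simp_all
      have A2: "F \<subseteq> E" "unitary_op sc ip u" "fixes_perp ip u E" using A by simp_all
      have P2: "p2 sc ip E F u" unfolding p2_def p2_axioms_def
        using Hs A1 A2 by simp
      interpret P: p2 sc ip E F u by (rule P2)
      show "let p = pi_EF sc ip E F u in
          unitary_op sc ip p \<and> fixes_perp ip p F \<and>
          (\<forall>w. unitary_op sc ip w \<and> fixes_perp ip w F \<longrightarrow> dist_rank sc u p \<le> dist_rank sc u w) \<and>
          (\<forall>w. unitary_op sc ip w \<and> fixes_perp ip w F \<and> dist_rank sc u w \<le> dist_rank sc u p \<longrightarrow> w = p) \<and>
          range (\<lambda>x. u x - p x) = (\<lambda>x. u x - x) ` orth ip F \<and>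
          int (dist_rank sc u p) = int (vector_space.dim sc E) - int (vector_space.dim sc F)
             - int (vector_space.dim sc {x \<in> E \<inter> orth ip F. u x = x}) \<and>
          ((\<forall>x\<in>E \<inter> orth ip F. u x = x \<longrightarrow> x = 0) \<longrightarrow>
             int (dist_rank sc u p) = int (vector_space.dim sc E) - int (vector_space.dim sc F))"
        unfolding Let_def P.pi_eq by (rule P.part2)
    qed
  qed
qed

end
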